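(* Let $X$ be a Banach space and let $\alpha$ be a left tensorial norm on $\ell_\infty\otimes X$. Then there exist a Banach lattice $L$ and a linear isometry $J\colon X\to L$ such that for all $k\in\mathbb{N}$ and all $y_1,\dots,y_k\in X$, $$\Big\|\bigvee_{j=1}^k |Jy_j|\Big\|_L=\alpha\Big(\sum_{j=1}^k e_j\otimes y_j\Big).$$
   Context: All spaces are real. $(e_j)$ denotes the unit vector basis of $c_0\subseteq\ell_\infty$. A norm $\alpha$ on $Y\otimes X$ ($Y,X$ Banach spaces) is a crossnorm if $\alpha(y\otimes x)=\|y\|\|x\|$; it is called left tensorial if it is a crossnorm and for every bounded operator $T\colon Y\to Y$ the operator $T\otimes I_X$ is bounded on $(Y\otimes X,\alpha)$ with $\|T\otimes I_X\|\le\|T\|$, where $I_X$ is the identity of $X$. $\bigvee$ denotes the lattice supremum and $|\cdot|$ the lattice modulus. *)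

theory Defs
  imports "HOL-Analysis.Analysis"
begin

text \<open>l_infinity is modelled by the library type of bounded (continuous) functions
  on the discrete space nat, with the sup norm.\<close>

type_synonym linf = "nat \<Rightarrow>\<^sub>C real"

definition unit_vec :: "nat \<Rightarrow> linf"
  where "unit_vec j = Bcontfun (\<lambda>n. if n = j then 1 else 0)"

text \<open>The algebraic tensor product l_infinity (x) X is identified (via the canonical
  injective map) with the space of X-valued sequences of the form
  n |-> sum_i y_i(n) x_i; the elementary tensor y (x) x is n |-> y(n) x.\<close>

definition tensor_of :: "nat \<Rightarrow> (nat \<Rightarrow> linf) \<Rightarrow> (nat \<Rightarrow> 'x::real_vector) \<Rightarrow> (nat \<Rightarrow> 'x)"
  where "tensor_of m y x = (\<lambda>n. \<Sum>i<m. apply_bcontfun (y i) n *\<^sub>R x i)"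

definition linf_tensor :: "(nat \<Rightarrow> 'x::real_vector) set"
  where "linf_tensor = {f. \<exists>m y x. f = tensor_of m y x}"

definition elem_tensor :: "linf \<Rightarrow> 'x::real_vector \<Rightarrow> (nat \<Rightarrow> 'x)"
  where "elem_tensor y x = (\<lambda>n. apply_bcontfun y n *\<^sub>R x)"

definition is_norm_on :: "(nat \<Rightarrow> 'x::real_vector) set \<Rightarrow> ((nat \<Rightarrow> 'x) \<Rightarrow> real) \<Rightarrow> bool"
  where "is_norm_on V N \<longleftrightarrow>
     (\<forall>f\<in>V. N f = 0 \<longleftrightarrow> f = (\<lambda>n. 0)) \<and>
     (\<forall>f\<in>V. \<forall>c. N (\<lambda>n. c *\<^sub>R f n) = \<bar>c\<bar> * N f) \<and>
     (\<forall>f\<in>V. \<forall>g\<in>V. N (\<lambda>n. f n + g n) \<le> N f + N g)"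

definition crossnorm :: "((nat \<Rightarrow> 'x::real_normed_vector) \<Rightarrow> real) \<Rightarrow> bool"
  where "crossnorm \<alpha> \<longleftrightarrow> is_norm_on linf_tensor \<alpha> \<and>
     (\<forall>y x. \<alpha> (elem_tensor y x) = norm y * norm x)"

definition left_tensorial :: "((nat \<Rightarrow> 'x::real_normed_vector) \<Rightarrow> real) \<Rightarrow> bool"
  where "left_tensorial \<alpha> \<longleftrightarrow> crossnorm \<alpha> \<and>
     (\<forall>T :: linf \<Rightarrow> linf. bounded_linear T \<longrightarrow>
        (\<forall>m y x. \<alpha> (tensor_of m (\<lambda>i. T (y i)) x) \<le> onorm T * \<alpha> (tensor_of m y x)))"

record 'l blat =
  bl_carrier :: "'l set"
  bl_add :: "'l \<Rightarrow> 'l \<Rightarrow> 'l"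
  bl_scale :: "real \<Rightarrow> 'l \<Rightarrow> 'l"
  bl_zero :: "'l"
  bl_le :: "'l \<Rightarrow> 'l \<Rightarrow> bool"
  bl_norm :: "'l \<Rightarrow> real"

definition bl_sup :: "'l blat \<Rightarrow> 'l \<Rightarrow> 'l \<Rightarrow> 'l"
  where "bl_sup L x y = (THE z. z \<in> bl_carrier L \<and> bl_le L x z \<and> bl_le L y z \<and>
                          (\<forall>w\<in>bl_carrier L. bl_le L x w \<and> bl_le L y w \<longrightarrow> bl_le L z w))"

definition bl_abs :: "'l blat \<Rightarrow> 'l \<Rightarrow> 'l"
  where "bl_abs L x = bl_sup L x (bl_scale L (-1) x)"

text \<open>Finite supremum a_1 v ... v a_k (meaningful for k >= 1).\<close>
fun bl_Sup :: "'l blat \<Rightarrow> (nat \<Rightarrow> 'l) \<Rightarrow> nat \<Rightarrow> 'l" where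
  "bl_Sup L a 0 = bl_zero L"
| "bl_Sup L a (Suc 0) = a 1"
| "bl_Sup L a (Suc (Suc k)) = bl_sup L (bl_Sup L a (Suc k)) (a (Suc (Suc k)))"

definition banach_lattice :: "'l blat \<Rightarrow> bool" where
  "banach_lattice L \<longleftrightarrow>
   (let S = bl_carrier L; add = bl_add L; sc = bl_scale L; z = bl_zero L;
        le = bl_le L; nm = bl_norm L; diff = (\<lambda>x y. add x (sc (-1) y)) in
    \<comment> \<open>real vector space\<close>
    z \<in> S \<and> (\<forall>x\<in>S. \<forall>y\<in>S. add x y \<in> S) \<and> (\<forall>a. \<forall>x\<in>S. sc a x \<in> S) \<and>
    (\<forall>x\<in>S. \<forall>y\<in>S. \<forall>w\<in>S. add (add x y) w = add x (add y w)) \<and>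
    (\<forall>x\<in>S. \<forall>y\<in>S. add x y = add y x) \<and>
    (\<forall>x\<in>S. add x z = x) \<and>
    (\<forall>x\<in>S. \<exists>y\<in>S. add x y = z) \<and>
    (\<forall>a. \<forall>x\<in>S. \<forall>y\<in>S. sc a (add x y) = add (sc a x) (sc a y)) \<and>
    (\<forall>a b. \<forall>x\<in>S. sc (a + b) x = add (sc a x) (sc b x)) \<and>
    (\<forall>a b. \<forall>x\<in>S. sc a (sc b x) = sc (a * b) x) \<and>
    (\<forall>x\<in>S. sc 1 x = x) \<and>
    \<comment> \<open>ordered vector space\<close>
    (\<forall>x\<in>S. le x x) \<and>
    (\<forall>x\<in>S. \<forall>y\<in>S. le x y \<and> le y x \<longrightarrow> x = y) \<and>
    (\<forall>x\<in>S. \<forall>y\<in>S. \<forall>w\<in>S. le x y \<and> le y w \<longrightarrow> le x w) \<and>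
    (\<forall>x\<in>S. \<forall>y\<in>S. \<forall>w\<in>S. le x y \<longrightarrow> le (add x w) (add y w)) \<and>
    (\<forall>a. \<forall>x\<in>S. \<forall>y\<in>S. le x y \<and> 0 \<le> a \<longrightarrow> le (sc a x) (sc a y)) \<and>
    \<comment> \<open>vector lattice: every pair has a least upper bound\<close>
    (\<forall>x\<in>S. \<forall>y\<in>S. \<exists>u\<in>S. le x u \<and> le y u \<and> (\<forall>w\<in>S. le x w \<and> le y w \<longrightarrow> le u w)) \<and>
    \<comment> \<open>norm\<close>
    (\<forall>x\<in>S. nm x = 0 \<longleftrightarrow> x = z) \<and>
    (\<forall>a. \<forall>x\<in>S. nm (sc a x) = \<bar>a\<bar> * nm x) \<and>
    (\<forall>x\<in>S. \<forall>y\<in>S. nm (add x y) \<le> nm x + nm y) \<and>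
    \<comment> \<open>lattice norm\<close>
    (\<forall>x\<in>S. \<forall>y\<in>S. le (bl_abs L x) (bl_abs L y) \<longrightarrow> nm x \<le> nm y) \<and>
    \<comment> \<open>completeness\<close>
    (\<forall>s::nat \<Rightarrow> 'l. (\<forall>n. s n \<in> S) \<and>
        (\<forall>e>0. \<exists>N. \<forall>m\<ge>N. \<forall>n\<ge>N. nm (diff (s m) (s n)) < e) \<longrightarrow>
        (\<exists>l\<in>S. \<forall>e>0. \<exists>N. \<forall>n\<ge>N. nm (diff (s n) l) < e)))"

definition linear_isometry_into :: "'l blat \<Rightarrow> ('x::real_normed_vector \<Rightarrow> 'l) \<Rightarrow> bool" where
  "linear_isometry_into L J \<longleftrightarrow>
     (\<forall>x. J x \<in> bl_carrier L) \<and>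
     (\<forall>x y. J (x + y) = bl_add L (J x) (J y)) \<and>
     (\<forall>c x. J (c *\<^sub>R x) = bl_scale L c (J x)) \<and>
     (\<forall>x. bl_norm L (J x) = norm x)"

end

theory Submission
  imports Defs "HOL-Library.Function_Algebras"
begin


definition good_graph :: "('v::real_vector \<Rightarrow> real) \<Rightarrow> 'v \<Rightarrow> ('v \<times> real) set \<Rightarrow> bool" where
  "good_graph p y0 G \<longleftrightarrow>
    (\<forall>x a b. (x,a) \<in> G \<longrightarrow> (x,b) \<in> G \<longrightarrow> a = b) \<and>
    (\<forall>x a y b. (x,a) \<in> G \<longrightarrow> (y,b) \<in> G \<longrightarrow> (x+y, a+b) \<in> G) \<and>
    (\<forall>x a c. (x,a) \<in> G \<longrightarrow> (c *\<^sub>R x, c*a) \<in> G) \<and>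
    (\<forall>x a. (x,a) \<in> G \<longrightarrow> a \<le> p x) \<and>
    (y0, p y0) \<in> G"

lemma good_graphD:
  assumes "good_graph p y0 G"
  shows "\<And>x a b. (x,a) \<in> G \<Longrightarrow> (x,b) \<in> G \<Longrightarrow> a = b"
    and "\<And>x a y b. (x,a) \<in> G \<Longrightarrow> (y,b) \<in> G \<Longrightarrow> (x+y, a+b) \<in> G"
    and "\<And>x a c. (x,a) \<in> G \<Longrightarrow> (c *\<^sub>R x, c*a) \<in> G"
    and "\<And>x a. (x,a) \<in> G \<Longrightarrow> a \<le> p x"
    and "(y0, p y0) \<in> G"
  using assms unfolding good_graph_def by simp_all

lemma hahn_banach_seminorm:
  fixes p :: "'v::real_vector \<Rightarrow> real"
  assumes sub: "\<And>x y. p (x + y) \<le> p x + p y"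
    and hom: "\<And>c x. p (c *\<^sub>R x) = \<bar>c\<bar> * p x"
  shows "\<exists>f. linear f \<and> (\<forall>x. f x \<le> p x) \<and> f y0 = p y0"
proof -
  have p0: "p 0 = 0" using hom[of 0 0] by simp
  have pnn: "p x \<ge> 0" for x
  proof -
    have "p 0 \<le> p x + p (-x)" using sub[of x "-x"] by simp
    moreover have "p (-x) = p x" using hom[of "-1" x] by simp
    ultimately show ?thesis using p0 by simp
  qed
  define A where "A = {G. good_graph p y0 G}"
  define G0 where "G0 = {(t *\<^sub>R y0, t * p y0) | t. True}"
  have G0A: "G0 \<in> A"
    unfolding A_def mem_Collect_eq good_graph_def
  proof (intro conjI allI impI)
    fix x a b assume "(x,a) \<in> G0" "(x,b) \<in> G0"
    then obtain t s where ts: "x = t *\<^sub>R y0" "a = t * p y0" "x = s *\<^sub>R y0" "b = s * p y0"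
      unfolding G0_def by blast
    show "a = b"
    proof (cases "y0 = 0")
      case True then show ?thesis using ts p0 by simp
    next
      case False
      then have "t = s" using ts by (metis scaleR_cancel_right)
      then show ?thesis using ts by simp
    qed
  next
    fix x a y b assume "(x,a) \<in> G0" "(y,b) \<in> G0"
    then obtain t s where ts: "x = t *\<^sub>R y0" "a = t * p y0" "y = s *\<^sub>R y0" "b = s * p y0"
      unfolding G0_def by blast
    show "(x + y, a + b) \<in> G0"
      using ts unfolding G0_def by (auto intro!: exI[of _ "t+s"] simp: algebra_simps)
  next
    fix x a c assume "(x,a) \<in> G0"
    then obtain t where ts: "x = t *\<^sub>R y0" "a = t * p y0" unfolding G0_def by blast
    show "(c *\<^sub>R x, c * a) \<in> G0"
      using ts unfolding G0_def by (auto intro!: exI[of _ "c*t"] simp: algebra_simps)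
  next
    fix x a assume "(x,a) \<in> G0"
    then obtain t where ts: "x = t *\<^sub>R y0" "a = t * p y0" unfolding G0_def by blast
    have "t * p y0 \<le> \<bar>t\<bar> * p y0" using pnn[of y0] by (simp add: mult_right_mono)
    then show "a \<le> p x" using ts hom by simp
  next
    show "(y0, p y0) \<in> G0" unfolding G0_def by (auto intro!: exI[of _ 1])
  qed
  have chainsA: "\<forall>C\<in>chains A. \<exists>U\<in>A. \<forall>X\<in>C. X \<subseteq> U"
  proof
    fix C assume C: "C \<in> chains A"
    show "\<exists>U\<in>A. \<forall>X\<in>C. X \<subseteq> U"
    proof (cases "C = {}")
      case True then show ?thesis using G0A by auto
    next
      case False
      have CA: "C \<subseteq> A" and ch: "\<And>X Y. X \<in> C \<Longrightarrow> Y \<in> C \<Longrightarrow> X \<subseteq> Y \<or> Y \<subseteq> X"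
        using C unfolding chains_def chain_subset_def by auto
      have gg: "\<And>X. X \<in> C \<Longrightarrow> good_graph p y0 X" using CA A_def by auto
      have two: "\<exists>Z\<in>C. (x,a) \<in> Z \<and> (y,b) \<in> Z" if xy: "(x,a) \<in> \<Union>C" "(y,b) \<in> \<Union>C" for x a y b
      proof -
        obtain X Y where "X \<in> C" "Y \<in> C" "(x,a) \<in> X" "(y,b) \<in> Y" using xy by auto
        then show ?thesis using ch[of X Y] by auto
      qed
      have "good_graph p y0 (\<Union>C)"
        unfolding good_graph_def
      proof (intro conjI allI impI)
        fix x a b assume "(x,a) \<in> \<Union>C" "(x,b) \<in> \<Union>C"
        then obtain Z where "Z \<in> C" "(x,a) \<in> Z" "(x,b) \<in> Z" using two by blast
        then show "a = b" using gg[of Z] unfolding good_graph_def by blast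
      next
        fix x a y b assume "(x,a) \<in> \<Union>C" "(y,b) \<in> \<Union>C"
        then obtain Z where "Z \<in> C" "(x,a) \<in> Z" "(y,b) \<in> Z" using two by blast
        then show "(x+y,a+b) \<in> \<Union>C" using gg[of Z] unfolding good_graph_def by blast
      next
        fix x a c assume "(x,a) \<in> \<Union>C"
        then obtain Z where "Z \<in> C" "(x,a) \<in> Z" by blast
        then show "(c *\<^sub>R x, c*a) \<in> \<Union>C" using gg[of Z] unfolding good_graph_def by blast
      next
        fix x a assume "(x,a) \<in> \<Union>C"
        then obtain Z where "Z \<in> C" "(x,a) \<in> Z" by blast
        then show "a \<le> p x" using gg[of Z] unfolding good_graph_def by blast
      next
        obtain Z where "Z \<in> C" using False by blast
        then show "(y0, p y0) \<in> \<Union>C" using gg[of Z] unfolding good_graph_def by blast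
      qed
      then show ?thesis unfolding A_def by blast
    qed
  qed
  obtain M where MA: "M \<in> A" and Mmax0: "\<forall>X\<in>A. M \<subseteq> X \<longrightarrow> X = M"
    using Zorn_Lemma2[OF chainsA] by blast
  have Mmax: "\<And>X. X \<in> A \<Longrightarrow> M \<subseteq> X \<Longrightarrow> X = M" using Mmax0 by simp
  have gM: "good_graph p y0 M" using MA unfolding A_def by simp
  note uniq = good_graphD(1)[OF gM] and addM = good_graphD(2)[OF gM] and scM = good_graphD(3)[OF gM]
    and domM = good_graphD(4)[OF gM] and y0M = good_graphD(5)[OF gM]
  have zeroM: "(0,0) \<in> M" using scM[OF y0M, of 0] by simp
  have total: "\<exists>a. (x0, a) \<in> M" for x0
  proof (rule ccontr)
    assume nx: "\<nexists>a. (x0, a) \<in> M"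
    define D where "D = fst ` M"
    define S where "S = {a - p (h - x0) | h a. (h,a) \<in> M}"
    define c where "c = Sup S"
    have Sne: "S \<noteq> {}" using zeroM unfolding S_def by blast
    have key: "a - p (h - x0) \<le> p (h' + x0) - a'" if "(h,a) \<in> M" "(h',a') \<in> M" for h a h' a'
    proof -
      have "a + a' \<le> p (h + h')" using domM[OF addM[OF that]] .
      also have "\<dots> = p ((h - x0) + (h' + x0))" by (simp add: algebra_simps)
      also have "\<dots> \<le> p (h - x0) + p (h' + x0)" by (rule sub)
      finally show ?thesis by simp
    qed
    have Sbdd: "bdd_above S"
    proof (rule bdd_aboveI[of _ "p (0 + x0) - 0"])
      fix s assume "s \<in> S"
      then obtain h a where "s = a - p (h - x0)" "(h,a) \<in> M" unfolding S_def by blast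
      then show "s \<le> p (0 + x0) - 0" using key[OF _ zeroM, of h a] by simp
    qed
    have c_ge: "a - p (h - x0) \<le> c" if "(h,a) \<in> M" for h a
      unfolding c_def using that Sbdd by (auto intro!: cSup_upper simp: S_def)
    have c_le: "c \<le> p (h' + x0) - a'" if "(h',a') \<in> M" for h' a'
      unfolding c_def using Sne key[OF _ that] by (auto intro!: cSup_least simp: S_def)
    define M' where "M' = {(h + t *\<^sub>R x0, a + t * c) | h a t. (h,a) \<in> M}"
    have sub_M: "M \<subseteq> M'"
    proof
      fix z assume "z \<in> M"
      then obtain h a where ha: "z = (h,a)" "(h,a) \<in> M" by (cases z) auto
      then have "z = (h + 0 *\<^sub>R x0, a + 0 * c)" by simp
      then show "z \<in> M'" unfolding M'_def using ha(2) by blast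
    qed
    have neq: "M' \<noteq> M"
    proof
      assume "M' = M"
      moreover have "(x0, c) = (0 + 1 *\<^sub>R x0, 0 + 1 * c)" by simp
      then have "(x0, c) \<in> M'" unfolding M'_def using zeroM by blast
      ultimately show False using nx by blast
    qed
    have inD: "t = s \<and> h = h'" if "(h,a) \<in> M" "(h',a') \<in> M" "h + t *\<^sub>R x0 = h' + s *\<^sub>R x0" for h a h' a' t s
    proof (cases "t = s")
      case True then show ?thesis using that by simp
    next
      case False
      have E: "(t - s) *\<^sub>R x0 = h' - h" using that(3) by (simp add: algebra_simps)
      have "x0 = (1/(t-s)) *\<^sub>R ((t-s) *\<^sub>R x0)" using False by simp
      also have "\<dots> = (1/(t-s)) *\<^sub>R (h' + (-1) *\<^sub>R h)" using E by simp
      finally have "x0 = (1/(t-s)) *\<^sub>R (h' + (-1) *\<^sub>R h)" .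
      moreover have "(h' + (-1) *\<^sub>R h, a' + (-1) * a) \<in> M" using addM[OF that(2) scM[OF that(1)]] .
      ultimately have "(x0, (1/(t-s)) * (a' + (-1) * a)) \<in> M" using scM by metis
      then show ?thesis using nx by blast
    qed
    have "good_graph p y0 M'"
      unfolding good_graph_def
    proof (intro conjI allI impI)
      fix x a b assume "(x,a) \<in> M'" "(x,b) \<in> M'"
      then obtain h1 a1 t1 h2 a2 t2 where H: "(h1,a1) \<in> M" "(h2,a2) \<in> M" "x = h1 + t1 *\<^sub>R x0" "a = a1 + t1 * c"
        "x = h2 + t2 *\<^sub>R x0" "b = a2 + t2 * c" unfolding M'_def by blast
      then have "t1 = t2 \<and> h1 = h2" using inD[of h1 a1 h2 a2 t1 t2] by simp
      then show "a = b" using H uniq[of h1 a1 a2] by simp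
    next
      fix x a y b assume "(x,a) \<in> M'" "(y,b) \<in> M'"
      then obtain h1 a1 t1 h2 a2 t2 where H: "(h1,a1) \<in> M" "(h2,a2) \<in> M" "x = h1 + t1 *\<^sub>R x0" "a = a1 + t1 * c"
        "y = h2 + t2 *\<^sub>R x0" "b = a2 + t2 * c" unfolding M'_def by blast
      have "(h1+h2, a1+a2) \<in> M" using addM[OF H(1,2)] .
      moreover have "x + y = (h1+h2) + (t1+t2) *\<^sub>R x0" "a + b = (a1+a2) + (t1+t2) * c"
        using H by (simp_all add: algebra_simps)
      ultimately show "(x+y, a+b) \<in> M'" unfolding M'_def by blast
    next
      fix x a r assume "(x,a) \<in> M'"
      then obtain h1 a1 t1 where H: "(h1,a1) \<in> M" "x = h1 + t1 *\<^sub>R x0" "a = a1 + t1 * c"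
        unfolding M'_def by blast
      have "(r *\<^sub>R h1, r*a1) \<in> M" using scM[OF H(1)] .
      moreover have "r *\<^sub>R x = r *\<^sub>R h1 + (r*t1) *\<^sub>R x0" "r * a = r*a1 + (r*t1) * c"
        using H by (simp_all add: algebra_simps)
      ultimately show "(r *\<^sub>R x, r*a) \<in> M'" unfolding M'_def by blast
    next
      fix x a assume "(x,a) \<in> M'"
      then obtain h a1 t where H: "(h,a1) \<in> M" "x = h + t *\<^sub>R x0" "a = a1 + t * c"
        unfolding M'_def by blast
      show "a \<le> p x"
      proof (cases "t = 0")
        case True then show ?thesis using H domM by simp
      next
        case False
        have hM: "((1/t) *\<^sub>R h, (1/t) * a1) \<in> M" using scM[OF H(1)] .
        show ?thesis
        proof (cases "t > 0")
          case True
          define v where "v = (1/t) *\<^sub>R h + x0"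
          have c1: "c \<le> p v - (1/t) * a1" using c_le[OF hM] unfolding v_def .
          have "t * c \<le> t * (p v - (1/t) * a1)" using mult_left_mono[OF c1, of t] True by simp
          also have "\<dots> = t * p v - a1" using True by (simp add: right_diff_distrib)
          also have "t * p v = p (t *\<^sub>R v)" using hom[of t v] True by (simp only: abs_of_pos)
          also have "t *\<^sub>R v = x" unfolding v_def using True H by (simp add: algebra_simps)
          finally show ?thesis using H by simp
        next
          case False2: False
          define s where "s = -t"
          have s0: "s > 0" using False False2 s_def by simp
          have hM': "((1/s) *\<^sub>R h, (1/s) * a1) \<in> M" using scM[OF H(1)] .
          define v where "v = (1/s) *\<^sub>R h - x0"
          have c1: "(1/s) * a1 - p v \<le> c" using c_ge[OF hM'] unfolding v_def .
          have "s * ((1/s) * a1 - p v) \<le> s * c" using mult_left_mono[OF c1, of s] s0 by simp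
          moreover have "s * ((1/s) * a1 - p v) = a1 - s * p v" using s0 by (simp add: right_diff_distrib)
          moreover have "s * p v = p (s *\<^sub>R v)" using hom[of s v] s0 by (simp only: abs_of_pos)
          moreover have "s *\<^sub>R v = x" unfolding v_def using s0 H s_def by (simp add: algebra_simps)
          ultimately show ?thesis using H s_def by simp
        qed
      qed
    next
      show "(y0, p y0) \<in> M'" using sub_M y0M by blast
    qed
    then have "M' = M" using Mmax[of M'] sub_M unfolding A_def by blast
    then show False using neq by blast
  qed
  define f where "f x = (THE a. (x,a) \<in> M)" for x
  have fM: "(x, f x) \<in> M" for x
  proof -
    obtain a where "(x,a) \<in> M" using total by blast
    moreover have "(THE b. (x,b) \<in> M) = a" using \<open>(x,a) \<in> M\<close> uniq by (intro the_equality) blast+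
    ultimately show ?thesis unfolding f_def by simp
  qed
  have fval: "(x,a) \<in> M \<Longrightarrow> f x = a" for x a using uniq fM by blast
  have "linear f"
  proof (rule linearI)
    fix x y show "f (x + y) = f x + f y" using fval[OF addM[OF fM fM]] .
  next
    fix c x show "f (c *\<^sub>R x) = c *\<^sub>R f x" using fval[OF scM[OF fM]] by simp
  qed
  moreover have "\<forall>x. f x \<le> p x" using domM fM by blast
  moreover have "f y0 = p y0" using fval[OF y0M] .
  ultimately show ?thesis by blast
qed

instantiation "fun" :: (type, real_vector) real_vector
begin
definition scaleR_fun :: "real \<Rightarrow> ('a \<Rightarrow> 'b) \<Rightarrow> 'a \<Rightarrow> 'b" where "scaleR_fun c f = (\<lambda>x. c *\<^sub>R f x)"
instance by standard (auto simp: scaleR_fun_def fun_eq_iff scaleR_add_right scaleR_add_left)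
end




lemma Bcontfun_nat_apply:
  fixes g :: "nat \<Rightarrow> real"
  assumes "\<And>n. \<bar>g n\<bar> \<le> B"
  shows "apply_bcontfun (Bcontfun g) = g"
proof -
  have "g \<in> bcontfun" using assms by (intro bcontfun_normI) auto
  then show ?thesis by (simp add: Bcontfun_inverse)
qed

lemma unit_vec_apply: "apply_bcontfun (unit_vec j) n = (if n = j then 1 else 0)"
  unfolding unit_vec_def by (subst Bcontfun_nat_apply[of _ 1]) auto

lemma norm_unit_vec: "norm (unit_vec j) = 1"
proof (rule antisym)
  show "norm (unit_vec j) \<le> 1" by (rule norm_bound) (simp add: unit_vec_apply)
  show "1 \<le> norm (unit_vec j)" using norm_bounded[of "unit_vec j" j] by (simp add: unit_vec_apply)
qed

definition trunc :: "nat \<Rightarrow> (nat \<Rightarrow> 'x::real_vector) \<Rightarrow> nat \<Rightarrow> 'x" where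
  "trunc m z = (\<lambda>n. if n \<in> {1..m} then z n else 0)"

lemma sum_unit_vec_trunc:
  "(\<lambda>n. \<Sum>j\<in>{1..m}. apply_bcontfun (unit_vec j) n *\<^sub>R z j) = trunc m z"
proof
  fix n
  have "(\<Sum>j\<in>{1..m}. apply_bcontfun (unit_vec j) n *\<^sub>R z j) = (\<Sum>j\<in>{1..m}. if j = n then z n else 0)"
    by (rule sum.cong) (auto simp: unit_vec_apply)
  also have "\<dots> = trunc m z n" by (simp add: trunc_def)
  finally show "(\<Sum>j\<in>{1..m}. apply_bcontfun (unit_vec j) n *\<^sub>R z j) = trunc m z n" .
qed

lemma trunc_tensor: "trunc m z = tensor_of (Suc m) unit_vec (trunc m z)"
proof
  fix n
  have "tensor_of (Suc m) unit_vec (trunc m z) n = (\<Sum>i<Suc m. if i = n then trunc m z n else 0)"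
    unfolding tensor_of_def by (rule sum.cong) (auto simp: unit_vec_apply)
  also have "\<dots> = trunc m z n" by (auto simp: trunc_def)
  finally show "trunc m z n = tensor_of (Suc m) unit_vec (trunc m z) n" by simp
qed

lemma trunc_in: "trunc m z \<in> linf_tensor"
  unfolding linf_tensor_def using trunc_tensor by blast

lemma trunc_add: "(\<lambda>n. trunc m z n + trunc m z' n) = trunc m (\<lambda>n. z n + z' n)"
  by (auto simp: trunc_def)

lemma trunc_scale: "(\<lambda>n. c *\<^sub>R trunc m z n) = trunc m (\<lambda>n. c *\<^sub>R z n)"
  by (auto simp: trunc_def)

lemma trunc_cong: "(\<And>j. j \<in> {1..m} \<Longrightarrow> z j = z' j) \<Longrightarrow> trunc m z = trunc m z'"
  by (auto simp: trunc_def)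

locale lt =
  fixes \<alpha> :: "(nat \<Rightarrow> 'x::banach) \<Rightarrow> real"
  assumes LT: "left_tensorial \<alpha>"
begin

lemma cross: "crossnorm \<alpha>" using LT unfolding left_tensorial_def by simp

lemma isnorm: "is_norm_on linf_tensor \<alpha>" using cross unfolding crossnorm_def by simp

lemma isnormD:
  "f \<in> linf_tensor \<Longrightarrow> \<alpha> f = 0 \<longleftrightarrow> f = (\<lambda>n. 0)"
  "f \<in> linf_tensor \<Longrightarrow> \<alpha> (\<lambda>n. c *\<^sub>R f n) = \<bar>c\<bar> * \<alpha> f"
  "f \<in> linf_tensor \<Longrightarrow> g \<in> linf_tensor \<Longrightarrow> \<alpha> (\<lambda>n. f n + g n) \<le> \<alpha> f + \<alpha> g"
  using isnorm unfolding is_norm_on_def by simp_all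

lemma alpha_add: "\<alpha> (trunc m (\<lambda>n. z n + z' n)) \<le> \<alpha> (trunc m z) + \<alpha> (trunc m z')"
  using isnormD(3)[OF trunc_in[of m z] trunc_in[of m z']] unfolding trunc_add .

lemma alpha_scale: "\<alpha> (trunc m (\<lambda>n. c *\<^sub>R z n)) = \<bar>c\<bar> * \<alpha> (trunc m z)"
  using isnormD(2)[OF trunc_in[of m z], of c] unfolding trunc_scale .

lemma alpha_zero: "\<alpha> (\<lambda>n. 0) = 0"
proof -
  have "(\<lambda>n. 0::'x) = trunc 0 z" for z by (auto simp: trunc_def)
  then show ?thesis using isnormD(1)[OF trunc_in[of 0 "\<lambda>_. 0"]] by simp
qed

lemma alpha_nonneg: "\<alpha> (trunc m z) \<ge> 0"
proof -
  have "\<alpha> (trunc m (\<lambda>n. z n + (-1) *\<^sub>R z n)) \<le> \<alpha> (trunc m z) + \<alpha> (trunc m (\<lambda>n. (-1) *\<^sub>R z n))"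
    by (rule alpha_add)
  moreover have "trunc m (\<lambda>n. z n + (-1) *\<^sub>R z n) = (\<lambda>n. 0)" by (auto simp: trunc_def)
  ultimately show ?thesis using alpha_scale[of m "-1" z] alpha_zero by simp
qed

lemma alpha_one: "\<alpha> (trunc 1 (\<lambda>_. x)) = norm x"
proof -
  have "trunc 1 (\<lambda>_. x) = elem_tensor (unit_vec 1) x"
    by (auto simp: trunc_def elem_tensor_def unit_vec_apply)
  then show ?thesis using cross norm_unit_vec unfolding crossnorm_def by simp
qed

lemma alpha_contract:
  fixes \<sigma> :: "nat \<Rightarrow> nat" and \<epsilon> :: "nat \<Rightarrow> real"
  assumes eps: "\<And>n. \<bar>\<epsilon> n\<bar> \<le> 1" and sig: "\<And>n. n \<in> {1..k} \<Longrightarrow> \<sigma> n \<in> {1..m}"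
  shows "\<alpha> (trunc k (\<lambda>j. \<epsilon> j *\<^sub>R z (\<sigma> j))) \<le> \<alpha> (trunc m z)"
proof -
  define g where "g a = (\<lambda>n. if n \<in> {1..k} then \<epsilon> n * apply_bcontfun a (\<sigma> n) else 0)" for a :: linf
  define T where "T a = Bcontfun (g a)" for a
  have gb: "\<bar>g a n\<bar> \<le> norm a" for a n
  proof -
    have "\<bar>\<epsilon> n * apply_bcontfun a (\<sigma> n)\<bar> \<le> 1 * norm a"
      unfolding abs_mult using norm_bounded[of a "\<sigma> n"] eps[of n]
      by (intro mult_mono) auto
    then show ?thesis unfolding g_def by auto
  qed
  have Tapp: "apply_bcontfun (T a) = g a" for a
    unfolding T_def by (rule Bcontfun_nat_apply[OF gb])
  have bl: "bounded_linear T"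
  proof (rule bounded_linear_intro[of _ 1])
    fix x y show "T (x + y) = T x + T y"
      by (rule bcontfun_eqI) (simp add: Tapp g_def algebra_simps)
  next
    fix r x show "T (r *\<^sub>R x) = r *\<^sub>R T x"
      by (rule bcontfun_eqI) (simp add: Tapp g_def algebra_simps)
  next
    fix x show "norm (T x) \<le> norm x * 1"
      by simp (rule norm_bound, simp add: Tapp gb)
  qed
  have on: "onorm T \<le> 1"
    by (rule onorm_bound) (simp, rule norm_bound, simp add: Tapp gb)
  have eq: "tensor_of (Suc m) (\<lambda>i. T (unit_vec i)) (trunc m z) = trunc k (\<lambda>j. \<epsilon> j *\<^sub>R z (\<sigma> j))"
  proof
    fix n
    show "tensor_of (Suc m) (\<lambda>i. T (unit_vec i)) (trunc m z) n = trunc k (\<lambda>j. \<epsilon> j *\<^sub>R z (\<sigma> j)) n"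
    proof (cases "n \<in> {1..k}")
      case True
      have s: "\<sigma> n \<in> {1..m}" using sig[OF True] .
      have "tensor_of (Suc m) (\<lambda>i. T (unit_vec i)) (trunc m z) n
          = (\<Sum>i<Suc m. if i = \<sigma> n then \<epsilon> n *\<^sub>R z (\<sigma> n) else 0)"
        unfolding tensor_of_def
        by (rule sum.cong) (use True s in \<open>auto simp: Tapp g_def unit_vec_apply trunc_def\<close>)
      also have "\<dots> = \<epsilon> n *\<^sub>R z (\<sigma> n)" using s by (auto simp: sum.delta)
      finally show ?thesis using True by (simp add: trunc_def)
    next
      case False
      have "tensor_of (Suc m) (\<lambda>i. T (unit_vec i)) (trunc m z) n = 0"
        unfolding tensor_of_def using False by (intro sum.neutral) (auto simp: Tapp g_def)
      then show ?thesis using False unfolding trunc_def by auto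
    qed
  qed
  have "\<alpha> (tensor_of (Suc m) (\<lambda>i. T (unit_vec i)) (trunc m z)) \<le> onorm T * \<alpha> (tensor_of (Suc m) unit_vec (trunc m z))"
    using LT bl unfolding left_tensorial_def by blast
  also have "\<dots> = onorm T * \<alpha> (trunc m z)" using trunc_tensor[of m z] by simp
  also have "\<dots> \<le> 1 * \<alpha> (trunc m z)" using on alpha_nonneg by (intro mult_right_mono) auto
  finally show ?thesis using eq by simp
qed

end



definition Mx :: "('x \<Rightarrow> real) \<Rightarrow> nat \<Rightarrow> (nat \<Rightarrow> 'x) \<Rightarrow> real" where
  "Mx l m z = Max (insert 0 ((\<lambda>i. \<bar>l (z i)\<bar>) ` {1..m}))"

lemma Mx_nonneg: "0 \<le> Mx l m z"
  unfolding Mx_def by (rule Max_ge) auto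

lemma Mx_ge: "i \<in> {1..m} \<Longrightarrow> \<bar>l (z i)\<bar> \<le> Mx l m z"
  unfolding Mx_def by (rule Max_ge) auto

lemma Mx_le: "(\<And>i. i \<in> {1..m} \<Longrightarrow> \<bar>l (z i)\<bar> \<le> B) \<Longrightarrow> 0 \<le> B \<Longrightarrow> Mx l m z \<le> B"
  unfolding Mx_def by (subst Max_le_iff) auto

lemma Mx_attained:
  assumes "1 \<le> m"
  shows "\<exists>i\<in>{1..m}. Mx l m z = \<bar>l (z i)\<bar>"
proof -
  have "Mx l m z \<in> insert 0 ((\<lambda>i. \<bar>l (z i)\<bar>) ` {1..m})"
    unfolding Mx_def by (rule Max_in) auto
  then show ?thesis
  proof
    assume z: "Mx l m z = 0"
    have "\<bar>l (z 1)\<bar> \<le> 0" using Mx_ge[of 1 m l z] assms z by simp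
    then show ?thesis using z assms by (intro bexI[of _ 1]) auto
  qed auto
qed

definition fsum :: "(('x \<Rightarrow> real) \<Rightarrow> real) \<Rightarrow> nat \<times> (nat \<Rightarrow> real) \<times> (nat \<Rightarrow> 'x \<Rightarrow> real) \<Rightarrow> real" where
  "fsum F a = (case a of (n, c, ls) \<Rightarrow> \<Sum>i<n. c i * \<bar>F (ls i)\<bar>)"

lemma sum_apply_fun: "(\<Sum>j\<in>A. f j) x = (\<Sum>j\<in>A. f j x)"
  by (induct A rule: infinite_finite_induct) (auto simp: plus_fun_def)

lemma sum_shift1: "(\<Sum>i<k. f (Suc i)) = (\<Sum>j\<in>{1..k}. f j)"
  by (induct k) auto

context lt
begin

definition famA :: "(nat \<times> (nat \<Rightarrow> real) \<times> (nat \<Rightarrow> 'x \<Rightarrow> real)) set" where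
  "famA = {(n, c, ls). (\<forall>i<n. 0 \<le> c i \<and> linear (ls i)) \<and>
                        (\<forall>m z. (\<Sum>i<n. c i * Mx (ls i) m z) \<le> \<alpha> (trunc m z))}"

definition Gam :: "('x \<Rightarrow> real) set" where
  "Gam = {l. (1, \<lambda>_. 1, \<lambda>_. l) \<in> famA}"

definition nrm :: "(('x \<Rightarrow> real) \<Rightarrow> real) \<Rightarrow> real" where
  "nrm F = Sup (fsum F ` famA)"

definition carr :: "(('x \<Rightarrow> real) \<Rightarrow> real) set" where
  "carr = {F. (\<forall>g. g \<notin> Gam \<longrightarrow> F g = 0) \<and> bdd_above (fsum F ` famA)}"

definition LL :: "(('x \<Rightarrow> real) \<Rightarrow> real) blat" where
  "LL = \<lparr>bl_carrier = carr, bl_add = (\<lambda>F G g. F g + G g), bl_scale = (\<lambda>a F g. a * F g),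
         bl_zero = (\<lambda>g. 0), bl_le = (\<lambda>F G. \<forall>g. F g \<le> G g), bl_norm = nrm\<rparr>"

definition JJ :: "'x \<Rightarrow> ('x \<Rightarrow> real) \<Rightarrow> real" where
  "JJ x = (\<lambda>g. if g \<in> Gam then g x else 0)"

lemma famA_D: "(n, c, ls) \<in> famA \<Longrightarrow> i < n \<Longrightarrow> 0 \<le> c i"
  "(n, c, ls) \<in> famA \<Longrightarrow> i < n \<Longrightarrow> linear (ls i)"
  "(n, c, ls) \<in> famA \<Longrightarrow> (\<Sum>i<n. c i * Mx (ls i) m z) \<le> \<alpha> (trunc m z)"
  unfolding famA_def by auto

lemma famA_ne: "(0, \<lambda>_. 0, \<lambda>_ _. 0) \<in> famA"
  unfolding famA_def using alpha_nonneg by auto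

lemma Gam_linear: "g \<in> Gam \<Longrightarrow> linear g"
  unfolding Gam_def using famA_D(2)[of 1 "\<lambda>_. 1" "\<lambda>_. g" 0] by auto

lemma fsum_nonneg: "a \<in> famA \<Longrightarrow> 0 \<le> fsum F a"
  unfolding fsum_def by (cases a) (auto intro!: sum_nonneg dest: famA_D)

lemma fsum_mono2:
  assumes "a \<in> famA" "\<And>g. \<bar>H g\<bar> \<le> \<bar>F g\<bar> + \<bar>G g\<bar>"
  shows "fsum H a \<le> fsum F a + fsum G a"
proof -
  obtain n c ls where a: "a = (n, c, ls)" by (cases a)
  have "(\<Sum>i<n. c i * \<bar>H (ls i)\<bar>) \<le> (\<Sum>i<n. c i * \<bar>F (ls i)\<bar> + c i * \<bar>G (ls i)\<bar>)"
    using famA_D(1)[of n c ls] assms a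
    by (intro sum_mono) (simp add: distrib_left[symmetric] mult_left_mono)
  then show ?thesis unfolding fsum_def a by (simp add: sum.distrib)
qed

lemma fsum_mono:
  assumes "a \<in> famA" "\<And>g. \<bar>H g\<bar> \<le> \<bar>F g\<bar>"
  shows "fsum H a \<le> fsum F a"
  using fsum_mono2[of a H F "\<lambda>_. 0"] assms by (simp add: fsum_def split: prod.splits)

lemma fsum_scale: "fsum (\<lambda>g. c * F g) a = \<bar>c\<bar> * fsum F a"
  unfolding fsum_def by (cases a) (simp add: sum_distrib_left abs_mult algebra_simps)

lemma fsum_abs: "fsum (\<lambda>g. \<bar>F g\<bar>) a = fsum F a"
  unfolding fsum_def by (cases a) simp

lemma nrm_ge: "F \<in> carr \<Longrightarrow> a \<in> famA \<Longrightarrow> fsum F a \<le> nrm F"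
  unfolding nrm_def carr_def by (auto intro!: cSup_upper)

lemma nrm_le: "(\<And>a. a \<in> famA \<Longrightarrow> fsum F a \<le> B) \<Longrightarrow> nrm F \<le> B"
  unfolding nrm_def using famA_ne by (intro cSup_least) auto

lemma carrI: "(\<And>g. g \<notin> Gam \<Longrightarrow> F g = 0) \<Longrightarrow> (\<And>a. a \<in> famA \<Longrightarrow> fsum F a \<le> B) \<Longrightarrow> F \<in> carr"
  unfolding carr_def bdd_above_def by blast

lemma carr_off: "F \<in> carr \<Longrightarrow> g \<notin> Gam \<Longrightarrow> F g = 0"
  unfolding carr_def by blast

lemma nrm_nonneg: "F \<in> carr \<Longrightarrow> 0 \<le> nrm F"
  using nrm_ge[OF _ famA_ne, of F] fsum_nonneg[OF famA_ne, of F] by linarith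

lemma Gam_bound: "F \<in> carr \<Longrightarrow> g \<in> Gam \<Longrightarrow> \<bar>F g\<bar> \<le> nrm F"
  using nrm_ge[of F "(1, \<lambda>_. 1, \<lambda>_. g)"] unfolding Gam_def fsum_def by simp

lemma carr_comb:
  assumes "F \<in> carr" "G \<in> carr" "\<And>g. \<bar>H g\<bar> \<le> \<bar>F g\<bar> + \<bar>G g\<bar>"
  shows "H \<in> carr" "nrm H \<le> nrm F + nrm G"
proof -
  have b: "fsum H a \<le> nrm F + nrm G" if "a \<in> famA" for a
    using fsum_mono2[of a H F G, OF that assms(3)] nrm_ge[OF assms(1) that] nrm_ge[OF assms(2) that] by linarith
  show "H \<in> carr"
  proof (rule carrI[OF _ b])
    fix g assume "g \<notin> Gam"
    then show "H g = 0" using assms(3)[of g] carr_off[OF assms(1)] carr_off[OF assms(2)] by simp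
  qed
  show "nrm H \<le> nrm F + nrm G" by (rule nrm_le[OF b])
qed

lemma zero_carr: "(\<lambda>g. 0) \<in> carr"
  by (rule carrI[of _ 0]) (auto simp: fsum_def)

lemma add_carr: "F \<in> carr \<Longrightarrow> G \<in> carr \<Longrightarrow> (\<lambda>g. F g + G g) \<in> carr"
  using carr_comb(1)[of F G "\<lambda>g. F g + G g"] by (simp add: abs_triangle_ineq)

lemma nrm_add: "F \<in> carr \<Longrightarrow> G \<in> carr \<Longrightarrow> nrm (\<lambda>g. F g + G g) \<le> nrm F + nrm G"
  using carr_comb(2)[of F G "\<lambda>g. F g + G g"] by (simp add: abs_triangle_ineq)

lemma scale_carr: "F \<in> carr \<Longrightarrow> (\<lambda>g. c * F g) \<in> carr"
proof -
  assume F: "F \<in> carr"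
  show ?thesis
  proof (rule carrI)
    fix a assume "a \<in> famA"
    then show "fsum (\<lambda>g. c * F g) a \<le> \<bar>c\<bar> * nrm F"
      using nrm_ge[OF F] by (simp add: fsum_scale mult_left_mono)
  qed (use carr_off[OF F] in simp)
qed

lemma max_carr: "F \<in> carr \<Longrightarrow> G \<in> carr \<Longrightarrow> (\<lambda>g. max (F g) (G g)) \<in> carr"
  using carr_comb(1)[of F G "\<lambda>g. max (F g) (G g)"] by (simp add: max_def)

lemma abs_carr: "F \<in> carr \<Longrightarrow> (\<lambda>g. \<bar>F g\<bar>) \<in> carr"
  using carr_comb(1)[of F "\<lambda>_. 0" "\<lambda>g. \<bar>F g\<bar>"] zero_carr by simp

lemma nrm_scale_le: "F \<in> carr \<Longrightarrow> nrm (\<lambda>g. c * F g) \<le> \<bar>c\<bar> * nrm F"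
  by (rule nrm_le) (simp add: fsum_scale mult_left_mono nrm_ge)

lemma nrm_scale: "F \<in> carr \<Longrightarrow> nrm (\<lambda>g. c * F g) = \<bar>c\<bar> * nrm F"
proof (cases "c = 0")
  case True
  assume F: "F \<in> carr"
  have "nrm (\<lambda>g. 0) \<le> 0" by (rule nrm_le) (simp add: fsum_def)
  moreover have "0 \<le> nrm (\<lambda>g. 0::real)" using nrm_nonneg[OF zero_carr] .
  ultimately show ?thesis using True by simp
next
  case False
  assume F: "F \<in> carr"
  have "nrm F = nrm (\<lambda>g. (1/c) * (c * F g))" using False by simp
  also have "\<dots> \<le> \<bar>1/c\<bar> * nrm (\<lambda>g. c * F g)" by (rule nrm_scale_le[OF scale_carr[OF F]])
  finally have h1: "nrm F \<le> \<bar>1/c\<bar> * nrm (\<lambda>g. c * F g)" .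
  have h2: "\<bar>c\<bar> * nrm F \<le> \<bar>c\<bar> * (\<bar>1/c\<bar> * nrm (\<lambda>g. c * F g))"
    by (rule mult_left_mono[OF h1]) simp
  have "\<bar>c\<bar> * \<bar>1/c\<bar> = 1" using False by (simp add: abs_mult[symmetric])
  then have "\<bar>c\<bar> * (\<bar>1/c\<bar> * nrm (\<lambda>g. c * F g)) = nrm (\<lambda>g. c * F g)"
    by (simp only: mult.assoc[symmetric] mult_1)
  with h2 show ?thesis using nrm_scale_le[OF F, of c] by simp
qed

lemma nrm_mono: "F \<in> carr \<Longrightarrow> G \<in> carr \<Longrightarrow> (\<And>g. \<bar>F g\<bar> \<le> \<bar>G g\<bar>) \<Longrightarrow> nrm F \<le> nrm G"
  by (rule nrm_le) (meson fsum_mono nrm_ge order_trans)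

lemma nrm_abs: "nrm (\<lambda>g. \<bar>F g\<bar>) = nrm F"
  unfolding nrm_def fsum_abs ..

lemma nrm_zero_iff: "F \<in> carr \<Longrightarrow> nrm F = 0 \<longleftrightarrow> F = (\<lambda>g. 0)"
proof
  assume F: "F \<in> carr" and "nrm F = 0"
  then show "F = (\<lambda>g. 0)" using Gam_bound[OF F] carr_off[OF F] by (metis abs_le_zero_iff)
next
  assume "F = (\<lambda>g. 0)"
  moreover have "nrm (\<lambda>g. 0) \<le> 0" by (rule nrm_le) (simp add: fsum_def)
  moreover have "0 \<le> nrm (\<lambda>g. 0::real)" using nrm_nonneg[OF zero_carr] .
  ultimately show "nrm F = 0" by simp
qed

lemma sup_LL: "F \<in> carr \<Longrightarrow> G \<in> carr \<Longrightarrow> bl_sup LL F G = (\<lambda>g. max (F g) (G g))"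
  unfolding bl_sup_def
proof (rule the_equality)
  assume F: "F \<in> carr" and G: "G \<in> carr"
  show "(\<lambda>g. max (F g) (G g)) \<in> bl_carrier LL \<and> bl_le LL F (\<lambda>g. max (F g) (G g)) \<and>
        bl_le LL G (\<lambda>g. max (F g) (G g)) \<and>
        (\<forall>w\<in>bl_carrier LL. bl_le LL F w \<and> bl_le LL G w \<longrightarrow> bl_le LL (\<lambda>g. max (F g) (G g)) w)"
    using max_carr[OF F G] by (auto simp: LL_def)
  fix z assume "z \<in> bl_carrier LL \<and> bl_le LL F z \<and> bl_le LL G z \<and>
        (\<forall>w\<in>bl_carrier LL. bl_le LL F w \<and> bl_le LL G w \<longrightarrow> bl_le LL z w)"
  then have "\<forall>g. z g \<le> max (F g) (G g)" "\<forall>g. F g \<le> z g" "\<forall>g. G g \<le> z g"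
    using max_carr[OF F G] by (auto simp: LL_def)
  then show "z = (\<lambda>g. max (F g) (G g))" by (intro ext) (meson antisym max.boundedI)
qed

lemma abs_LL: "F \<in> carr \<Longrightarrow> bl_abs LL F = (\<lambda>g. \<bar>F g\<bar>)"
proof -
  assume F: "F \<in> carr"
  have "bl_scale LL (-1) F = (\<lambda>g. - F g)" by (simp add: LL_def)
  moreover have "(\<lambda>g. - F g) \<in> carr" using scale_carr[OF F, of "-1"] by simp
  ultimately show ?thesis unfolding bl_abs_def using sup_LL[OF F] by (auto simp: abs_if max_def)
qed

lemma Sup_LL:
  assumes "\<And>j. a j \<in> carr"
  shows "bl_Sup LL a (Suc k) = (\<lambda>g. Max ((\<lambda>j. a j g) ` {1..Suc k})) \<and> bl_Sup LL a (Suc k) \<in> carr"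
proof (induct k)
  case 0
  then show ?case using assms[of 1] by simp
next
  case (Suc k)
  have eq: "{1..Suc (Suc k)} = insert (Suc (Suc k)) {1..Suc k}" by auto
  have S: "bl_Sup LL a (Suc k) \<in> carr" using Suc by blast
  have e1: "bl_Sup LL a (Suc (Suc k)) = (\<lambda>g. max (bl_Sup LL a (Suc k) g) (a (Suc (Suc k)) g))"
    using sup_LL[OF S assms] by simp
  have mem: "bl_Sup LL a (Suc (Suc k)) \<in> carr" unfolding e1 by (rule max_carr[OF S assms])
  have "bl_Sup LL a (Suc (Suc k)) = (\<lambda>g. max (Max ((\<lambda>j. a j g) ` {1..Suc k})) (a (Suc (Suc k)) g))"
    unfolding e1 using Suc by simp
  also have "\<dots> = (\<lambda>g. Max ((\<lambda>j. a j g) ` {1..Suc (Suc k)}))"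
    unfolding eq by (auto simp: max.commute)
  finally show ?case using mem by simp
qed

end



context lt
begin

lemma JJ_abs_le: "\<bar>JJ x g\<bar> \<le> \<bar>g x\<bar>"
  unfolding JJ_def by auto

lemma JJ_carr: "JJ x \<in> carr"
proof (rule carrI)
  fix g assume "g \<notin> Gam" then show "JJ x g = 0" unfolding JJ_def by simp
next
  fix a assume a: "a \<in> famA"
  obtain n c ls where an: "a = (n, c, ls)" by (cases a)
  have "fsum (JJ x) a \<le> (\<Sum>i<n. c i * Mx (ls i) 1 (\<lambda>_. x))"
    unfolding an fsum_def prod.case
  proof (rule sum_mono)
    fix i assume "i \<in> {..<n}"
    then have "0 \<le> c i" using famA_D(1)[of n c ls i] a an by simp
    moreover have "\<bar>JJ x (ls i)\<bar> \<le> Mx (ls i) 1 (\<lambda>_. x)"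
      using JJ_abs_le[of x "ls i"] Mx_ge[of 1 1 "ls i" "\<lambda>_. x"] by simp
    ultimately show "c i * \<bar>JJ x (ls i)\<bar> \<le> c i * Mx (ls i) 1 (\<lambda>_. x)" by (rule mult_left_mono[rotated])
  qed
  also have "\<dots> \<le> \<alpha> (trunc 1 (\<lambda>_. x))" using famA_D(3) a an by simp
  finally show "fsum (JJ x) a \<le> \<alpha> (trunc 1 (\<lambda>_. x))" .
qed

lemma JJ_add: "JJ (x + y) = (\<lambda>g. JJ x g + JJ y g)"
  unfolding JJ_def by (auto simp: linear_add[OF Gam_linear])

lemma JJ_scale: "JJ (c *\<^sub>R x) = (\<lambda>g. c * JJ x g)"
  unfolding JJ_def by (auto simp: linear_scale[OF Gam_linear])

lemma trunc_trunc: "trunc k (trunc k z) = trunc k z"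
  by (auto simp: trunc_def)

lemma main_formula:
  assumes k: "1 \<le> k"
  shows "nrm (\<lambda>g. Max ((\<lambda>j. \<bar>JJ (y j) g\<bar>) ` {1..k})) = \<alpha> (trunc k y)"
proof -
  define G where "G = (\<lambda>g. Max ((\<lambda>j. \<bar>JJ (y j) g\<bar>) ` {1..k}))"
  have G_nonneg: "0 \<le> G g" for g
    unfolding G_def using k by (intro Max_ge_iff[THEN iffD2]) auto
  have G_le: "G g \<le> Mx g k y" for g
    unfolding G_def using k
    by (subst Max_le_iff) (auto intro: order_trans[OF JJ_abs_le Mx_ge])
  have G_ge: "\<bar>JJ (y j) g\<bar> \<le> G g" if "j \<in> {1..k}" for j g
    unfolding G_def using that by (intro Max_ge) auto
  have fsG: "fsum G a \<le> \<alpha> (trunc k y)" if a: "a \<in> famA" for a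
  proof -
    obtain n c ls where an: "a = (n, c, ls)" by (cases a)
    have "fsum G a \<le> (\<Sum>i<n. c i * Mx (ls i) k y)"
      unfolding an fsum_def
    proof (simp, rule sum_mono)
      fix i assume "i \<in> {..<n}"
      then have "0 \<le> c i" using famA_D(1)[of n c ls i] a an by simp
      moreover have "\<bar>G (ls i)\<bar> \<le> Mx (ls i) k y" using G_nonneg G_le by simp
      ultimately show "c i * \<bar>G (ls i)\<bar> \<le> c i * Mx (ls i) k y" by (rule mult_left_mono[rotated])
    qed
    also have "\<dots> \<le> \<alpha> (trunc k y)" using famA_D(3) a an by simp
    finally show "fsum G a \<le> \<alpha> (trunc k y)" .
  qed
  have up: "nrm G \<le> \<alpha> (trunc k y)" by (rule nrm_le[OF fsG])
  have Gc: "G \<in> carr"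
  proof (rule carrI[OF _ fsG])
    fix g assume "g \<notin> Gam" then show "G g = 0" unfolding G_def JJ_def using k by (simp add: image_constant_conv)
  qed
  define p where "p = (\<lambda>z::nat \<Rightarrow> 'x. \<alpha> (trunc k z))"
  have psub: "p (u + v) \<le> p u + p v" for u v
    unfolding p_def plus_fun_def by (rule alpha_add)
  have phom: "p (c *\<^sub>R u) = \<bar>c\<bar> * p u" for c u
    unfolding p_def scaleR_fun_def by (rule alpha_scale)
  obtain W where Wlin: "linear W" and Wle: "\<And>z. W z \<le> p z" and Wy: "W (trunc k y) = p (trunc k y)"
    using hahn_banach_seminorm[of p "trunc k y", OF psub phom] by blast
  define w where "w j x = W (\<lambda>n. if n = j then x else 0)" for j x
  have wlin: "linear (w j)" for j
  proof (rule linearI)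
    fix x1 x2 show "w j (x1 + x2) = w j x1 + w j x2"
    proof -
      have "(\<lambda>n. if n = j then x1 + x2 else 0) = (\<lambda>n. if n = j then x1 else 0) + (\<lambda>n. if n = j then x2 else 0)"
        by (auto simp: plus_fun_def)
      then show ?thesis unfolding w_def by (simp add: linear_add[OF Wlin])
    qed
  next
    fix r x show "w j (r *\<^sub>R x) = r *\<^sub>R w j x"
    proof -
      have "(\<lambda>n. if n = j then r *\<^sub>R x else 0) = r *\<^sub>R (\<lambda>n. if n = j then x else 0)"
        by (auto simp: scaleR_fun_def)
      then show ?thesis unfolding w_def by (simp add: linear_scale[OF Wlin])
    qed
  qed
  have wsum: "(\<Sum>j\<in>{1..k}. w j (u j)) = W (trunc k u)" for u
  proof -
    have "trunc k u = (\<Sum>j\<in>{1..k}. (\<lambda>n. if n = j then u j else 0))"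
      by (rule ext) (auto simp: sum_apply_fun trunc_def)
    then show ?thesis unfolding w_def by (simp add: linear_sum[OF Wlin])
  qed
  define fam where "fam = (k, (\<lambda>_::nat. 1::real), (\<lambda>i. w (Suc i)))"
  have famsum: "(\<Sum>i<k. Mx (w (Suc i)) m z) \<le> \<alpha> (trunc m z)" for m z
  proof (cases "m = 0")
    case True
    have "Mx l m z = 0" for l unfolding Mx_def True by simp
    then show ?thesis using alpha_nonneg by simp
  next
    case False
    then have m1: "1 \<le> m" by simp
    have "\<forall>j. \<exists>i. i \<in> {1..m} \<and> Mx (w j) m z = \<bar>w j (z i)\<bar>"
      using Mx_attained[OF m1] by blast
    then obtain \<sigma> where sig: "\<And>j. \<sigma> j \<in> {1..m}" and sigM: "\<And>j. Mx (w j) m z = \<bar>w j (z (\<sigma> j))\<bar>"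
      by metis
    define \<epsilon> where "\<epsilon> j = sgn (w j (z (\<sigma> j)))" for j
    have eps: "\<bar>\<epsilon> j\<bar> \<le> 1" for j unfolding \<epsilon>_def by (simp add: sgn_real_def)
    have "Mx (w j) m z = w j (\<epsilon> j *\<^sub>R z (\<sigma> j))" for j
      unfolding sigM \<epsilon>_def linear_scale[OF wlin] by (simp add: abs_sgn)
    then have "(\<Sum>i<k. Mx (w (Suc i)) m z) = (\<Sum>j\<in>{1..k}. w j (\<epsilon> j *\<^sub>R z (\<sigma> j)))"
      using sum_shift1[of "\<lambda>j. Mx (w j) m z" k] by simp
    also have "\<dots> = W (trunc k (\<lambda>j. \<epsilon> j *\<^sub>R z (\<sigma> j)))" by (rule wsum)
    also have "\<dots> \<le> \<alpha> (trunc k (trunc k (\<lambda>j. \<epsilon> j *\<^sub>R z (\<sigma> j))))" using Wle unfolding p_def by blast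
    also have "\<dots> = \<alpha> (trunc k (\<lambda>j. \<epsilon> j *\<^sub>R z (\<sigma> j)))" by (simp add: trunc_trunc)
    also have "\<dots> \<le> \<alpha> (trunc m z)" by (rule alpha_contract[OF eps sig])
    finally show ?thesis .
  qed
  have famA_fam: "fam \<in> famA"
    unfolding fam_def famA_def using wlin famsum by simp
  have wGam: "w j \<in> Gam" if "j \<in> {1..k}" for j
  proof -
    have "Mx (w j) m z \<le> \<alpha> (trunc m z)" for m z
    proof -
      have "Mx (w j) m z = Mx (w (Suc (j - 1))) m z" using that by simp
      also have "\<dots> \<le> (\<Sum>i<k. Mx (w (Suc i)) m z)"
        using that by (intro member_le_sum) (auto simp: Mx_nonneg)
      also have "\<dots> \<le> \<alpha> (trunc m z)" by (rule famsum)
      finally show ?thesis .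
    qed
    then show ?thesis unfolding Gam_def famA_def using wlin by simp
  qed
  have "\<alpha> (trunc k y) = W (trunc k y)" using Wy unfolding p_def by (simp add: trunc_trunc)
  also have "\<dots> = (\<Sum>j\<in>{1..k}. w j (y j))" by (rule wsum[symmetric])
  also have "\<dots> \<le> (\<Sum>j\<in>{1..k}. \<bar>G (w j)\<bar>)"
  proof (rule sum_mono)
    fix j assume j: "j \<in> {1..k}"
    have "w j (y j) \<le> \<bar>JJ (y j) (w j)\<bar>" using wGam[OF j] unfolding JJ_def by simp
    also have "\<dots> \<le> G (w j)" by (rule G_ge[OF j])
    finally show "w j (y j) \<le> \<bar>G (w j)\<bar>" by simp
  qed
  also have "\<dots> = fsum G fam" unfolding fam_def fsum_def using sum_shift1[of "\<lambda>j. \<bar>G (w j)\<bar>" k] by simp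
  also have "\<dots> \<le> nrm G" by (rule nrm_ge[OF Gc famA_fam])
  finally show ?thesis using up unfolding G_def by simp
qed

end



context lt
begin

lemma diff_carr: "F \<in> carr \<Longrightarrow> G \<in> carr \<Longrightarrow> (\<lambda>g. F g - G g) \<in> carr"
  using add_carr[OF _ scale_carr[of G "-1"], of F] by simp

lemma complete_LL:
  fixes s :: "nat \<Rightarrow> ('x \<Rightarrow> real) \<Rightarrow> real"
  assumes s: "\<And>n. s n \<in> carr"
    and C: "\<forall>e>0. \<exists>N. \<forall>m\<ge>N. \<forall>n\<ge>N. nrm (\<lambda>g. s m g - s n g) < e"
  shows "\<exists>l\<in>carr. \<forall>e>0. \<exists>N. \<forall>n\<ge>N. nrm (\<lambda>g. s n g - l g) < e"
proof -
  have pc: "Cauchy (\<lambda>n. s n g)" for g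
  proof (cases "g \<in> Gam")
    case True
    show ?thesis unfolding Cauchy_def
    proof (intro allI impI)
      fix e :: real assume "e > 0"
      then obtain N where N: "\<forall>m\<ge>N. \<forall>n\<ge>N. nrm (\<lambda>g. s m g - s n g) < e" using C by blast
      show "\<exists>M. \<forall>m\<ge>M. \<forall>n\<ge>M. dist (s m g) (s n g) < e"
      proof (intro exI allI impI)
        fix m n assume "N \<le> m" "N \<le> n"
        then have "nrm (\<lambda>g. s m g - s n g) < e" using N by blast
        moreover have "\<bar>s m g - s n g\<bar> \<le> nrm (\<lambda>g. s m g - s n g)"
          using Gam_bound[OF diff_carr[OF s s] True] by simp
        ultimately show "dist (s m g) (s n g) < e" by (simp add: dist_real_def)
      qed
    qed
  next
    case False
    then have "(\<lambda>n. s n g) = (\<lambda>n. 0)" using carr_off[OF s] by auto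
    then show ?thesis by (simp add: Cauchy_convergent_iff convergent_const)
  qed
  define l where "l g = lim (\<lambda>n. s n g)" for g
  have lim: "(\<lambda>n. s n g) \<longlonglongrightarrow> l g" for g
    unfolding l_def using pc[of g] by (simp add: Cauchy_convergent_iff convergent_LIMSEQ_iff)
  have fl: "(\<lambda>m. fsum (\<lambda>g. s m g - s n g) a) \<longlonglongrightarrow> fsum (\<lambda>g. l g - s n g) a" for n a
  proof -
    obtain k c ls where a: "a = (k, c, ls)" by (cases a)
    show ?thesis unfolding a fsum_def prod.case
      by (intro tendsto_intros lim)
  qed
  have bnd: "fsum (\<lambda>g. l g - s n g) a \<le> e"
    if a: "a \<in> famA" and N: "\<forall>m\<ge>N. nrm (\<lambda>g. s m g - s n g) < e" for a n e N
  proof (rule LIMSEQ_le_const2[OF fl])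
    show "\<exists>N. \<forall>m\<ge>N. fsum (\<lambda>g. s m g - s n g) a \<le> e"
    proof (intro exI allI impI)
      fix m assume "N \<le> m"
      then show "fsum (\<lambda>g. s m g - s n g) a \<le> e"
        using N nrm_ge[OF diff_carr[OF s s] a, of m n] by force
    qed
  qed
  obtain N1 where N1: "\<forall>m\<ge>N1. \<forall>n\<ge>N1. nrm (\<lambda>g. s m g - s n g) < 1" using C by force
  have lc: "l \<in> carr"
  proof (rule carrI)
    fix g assume "g \<notin> Gam"
    then have "(\<lambda>n. s n g) = (\<lambda>n. 0)" using carr_off[OF s] by auto
    then show "l g = 0" using lim[of g] LIMSEQ_unique[OF _ tendsto_const] by metis
  next
    fix a assume a: "a \<in> famA"
    have "fsum l a \<le> fsum (s N1) a + fsum (\<lambda>g. l g - s N1 g) a"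
      by (rule fsum_mono2[OF a]) linarith
    also have "\<dots> \<le> nrm (s N1) + 1"
      using nrm_ge[OF s a, of N1] bnd[OF a, of N1 N1 1] N1 by force
    finally show "fsum l a \<le> nrm (s N1) + 1" .
  qed
  show ?thesis
  proof (rule bexI[OF _ lc], intro allI impI)
    fix e :: real assume e: "e > 0"
    then obtain N where N: "\<forall>m\<ge>N. \<forall>n\<ge>N. nrm (\<lambda>g. s m g - s n g) < e/2" using C
      by (metis half_gt_zero)
    show "\<exists>N. \<forall>n\<ge>N. nrm (\<lambda>g. s n g - l g) < e"
    proof (intro exI allI impI)
      fix n assume n: "N \<le> n"
      have "nrm (\<lambda>g. s n g - l g) \<le> e/2"
      proof (rule nrm_le)
        fix a assume a: "a \<in> famA"
        have "fsum (\<lambda>g. s n g - l g) a \<le> fsum (\<lambda>g. l g - s n g) a"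
          by (rule fsum_mono[OF a]) linarith
        also have "\<dots> \<le> e/2" using bnd[OF a, of N n "e/2"] N n by force
        finally show "fsum (\<lambda>g. s n g - l g) a \<le> e/2" .
      qed
      then show "nrm (\<lambda>g. s n g - l g) < e" using e by linarith
    qed
  qed
qed

lemma LL_simps: "bl_carrier LL = carr" "bl_add LL = (\<lambda>F G g. F g + G g)"
  "bl_scale LL = (\<lambda>a F g. a * F g)" "bl_zero LL = (\<lambda>g. 0)"
  "bl_le LL = (\<lambda>F G. \<forall>g. F g \<le> G g)" "bl_norm LL = nrm"
  by (simp_all add: LL_def)

lemma bl_LL: "banach_lattice LL"
  unfolding banach_lattice_def Let_def LL_simps
proof (intro conjI ballI allI impI)
  show "(\<lambda>g. 0) \<in> carr" by (rule zero_carr)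
next
  fix x y assume "x \<in> carr" "y \<in> carr" then show "(\<lambda>g. x g + y g) \<in> carr" by (rule add_carr)
next
  fix a x assume "x \<in> carr" then show "(\<lambda>g. a * x g) \<in> carr" by (rule scale_carr)
next
  fix x assume "x \<in> carr"
  then show "\<exists>y\<in>carr. (\<lambda>g. x g + y g) = (\<lambda>g. 0)"
    by (intro bexI[of _ "\<lambda>g. (-1) * x g"] scale_carr) auto
next
  fix x y assume "x \<in> carr" "y \<in> carr" "(\<forall>g. x g \<le> y g) \<and> (\<forall>g. y g \<le> x g)"
  then show "x = y" by (auto intro: antisym)
next
  fix x y assume "x \<in> carr" "y \<in> carr"
  then show "\<exists>u\<in>carr. (\<forall>g. x g \<le> u g) \<and> (\<forall>g. y g \<le> u g) \<and>
     (\<forall>w\<in>carr. (\<forall>g. x g \<le> w g) \<and> (\<forall>g. y g \<le> w g) \<longrightarrow> (\<forall>g. u g \<le> w g))"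
    by (intro bexI[of _ "\<lambda>g. max (x g) (y g)"] max_carr) auto
next
  fix x assume "x \<in> carr" then show "nrm x = 0 \<longleftrightarrow> x = (\<lambda>g. 0)" by (rule nrm_zero_iff)
next
  fix a x assume "x \<in> carr" then show "nrm (\<lambda>g. a * x g) = \<bar>a\<bar> * nrm x" by (rule nrm_scale)
next
  fix x y assume "x \<in> carr" "y \<in> carr" then show "nrm (\<lambda>g. x g + y g) \<le> nrm x + nrm y" by (rule nrm_add)
next
  fix x y assume xy: "x \<in> carr" "y \<in> carr" and le: "\<forall>g. bl_abs LL x g \<le> bl_abs LL y g"
  then show "nrm x \<le> nrm y" using abs_LL[OF xy(1)] abs_LL[OF xy(2)] by (intro nrm_mono) auto
next
  fix s :: "nat \<Rightarrow> ('x \<Rightarrow> real) \<Rightarrow> real"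
  assume "(\<forall>n. s n \<in> carr) \<and> (\<forall>e>0. \<exists>N. \<forall>m\<ge>N. \<forall>n\<ge>N. nrm (\<lambda>g. s m g + - 1 * s n g) < e)"
  then show "\<exists>l\<in>carr. \<forall>e>0. \<exists>N. \<forall>n\<ge>N. nrm (\<lambda>g. s n g + - 1 * l g) < e"
    using complete_LL[of s] by simp
qed (auto simp: algebra_simps mult_left_mono intro: order_trans)

end

theorem theorem1p7:
  fixes \<alpha> :: "(nat \<Rightarrow> 'x::banach) \<Rightarrow> real"
  assumes "left_tensorial \<alpha>"
  shows "\<exists>(L :: (('x \<Rightarrow> real) \<Rightarrow> real) blat) (J :: 'x \<Rightarrow> (('x \<Rightarrow> real) \<Rightarrow> real)).
           banach_lattice L \<and> linear_isometry_into L J \<and>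
           (\<forall>k\<ge>1. \<forall>y :: nat \<Rightarrow> 'x.
              bl_norm L (bl_Sup L (\<lambda>j. bl_abs L (J (y j))) k) =
              \<alpha> (\<lambda>n. \<Sum>j\<in>{1..k}. apply_bcontfun (unit_vec j) n *\<^sub>R y j))"
proof -
  interpret lt \<alpha> by unfold_locales (rule assms)
  have formula: "bl_norm LL (bl_Sup LL (\<lambda>j. bl_abs LL (JJ (y j))) k) = \<alpha> (trunc k y)" if k: "1 \<le> k" for k y
  proof -
    obtain k' where k': "k = Suc k'" using k by (cases k) auto
    have ab: "bl_abs LL (JJ (y j)) = (\<lambda>g. \<bar>JJ (y j) g\<bar>)" for j by (rule abs_LL[OF JJ_carr])
    have "bl_Sup LL (\<lambda>j. bl_abs LL (JJ (y j))) k = (\<lambda>g. Max ((\<lambda>j. \<bar>JJ (y j) g\<bar>) ` {1..k}))"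
      using Sup_LL[of "\<lambda>j. bl_abs LL (JJ (y j))" k'] abs_carr[OF JJ_carr] unfolding ab k' by simp
    then show ?thesis using main_formula[OF k, of y] by (simp add: LL_simps)
  qed
  have iso: "linear_isometry_into LL JJ"
    unfolding linear_isometry_into_def LL_simps
  proof (intro conjI allI)
    fix x show "JJ x \<in> carr" by (rule JJ_carr)
  next
    fix x y show "JJ (x + y) = (\<lambda>g. JJ x g + JJ y g)" by (rule JJ_add)
  next
    fix c x show "JJ (c *\<^sub>R x) = (\<lambda>g. c * JJ x g)" by (rule JJ_scale)
  next
    fix x
    have "nrm (\<lambda>g. \<bar>JJ x g\<bar>) = \<alpha> (trunc 1 (\<lambda>_. x))"
      using main_formula[of 1 "\<lambda>_. x"] by simp
    then show "nrm (JJ x) = norm x" using alpha_one nrm_abs[of "JJ x"] by simp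
  qed
  show ?thesis unfolding sum_unit_vec_trunc
    by (intro exI[of _ LL] exI[of _ JJ] conjI bl_LL iso allI impI formula)
qed


end
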